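(* For $\theta\in\mathbb{R}$ and $u\in\{0,1\}$ let $$\mathcal{H}^\theta_u=\frac{1}{\sqrt{2}}\begin{bmatrix}1 & 1\\ (-1)^u e^{i\theta} & (-1)^{u+1}e^{i\theta}\end{bmatrix}.$$ Then for all $\theta\in\mathbb{R}$ and all $u,v\in\{0,1\}$, $\mathcal{H}^\theta_u\lvert v\rangle=\mathcal{H}^\theta_v\lvert u\rangle$. Moreover, the one-qubit scheme $\Xi=(\mathcal{QE},\mathcal{QD})$ is correct: for every secret bit $s$, every angle $\theta$ and every message bit $b$, $\mathcal{QD}_{s,\theta}(\mathcal{QE}_{s,\theta}(b))=b$ with probability $1$.
   Context: $\{\lvert 0\rangle,\lvert 1\rangle\}$ is the computational basis. The scheme $\Xi=(\mathcal{QE},\mathcal{QD})$, with secret bit $s\in\{0,1\}$ and equatorial angle $\theta$, is defined as follows. $\mathcal{QE}_{s,\theta}(b)$, for a message bit $b\in\{0,1\}$: prepare $\lvert s\rangle$ and $\lvert b\rangle$, sample a uniformly random bit $r\in\{0,1\}$, and output the pair of qubits $(\lvert c_0\rangle,\lvert c_1\rangle)=(\mathcal{H}^\theta_r\lvert s\rangle,\mathcal{H}^\theta_r\lvert b\rangle)$. $\mathcal{QD}_{s,\theta}(\lvert c_0\rangle,\lvert c_1\rangle)$: apply $(\mathcal{H}^\theta_s)^\dagger$ to $\lvert c_0\rangle$ and measure in the computational basis to obtain a bit $r$; then apply $(\mathcal{H}^\theta_r)^\dagger$ to $\lvert c_1\rangle$, measure in the computational basis to obtain a bit, and output it. *)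

theory Defs
  imports "Jordan_Normal_Form.Schur_Decomposition" "HOL-Probability.Probability_Mass_Function"
begin

definition ket :: "nat \<Rightarrow> complex Matrix.vec" where
  "ket v = unit_vec 2 v"

definition Hgate :: "real \<Rightarrow> nat \<Rightarrow> complex mat" where
  "Hgate \<theta> u = (complex_of_real (1 / sqrt 2)) \<cdot>\<^sub>m
     mat_of_rows_list 2 [[1, 1],
       [(-1) ^ u * exp (\<i> * complex_of_real \<theta>), (-1) ^ (u + 1) * exp (\<i> * complex_of_real \<theta>)]]"

definition measure_comp :: "complex Matrix.vec \<Rightarrow> nat pmf" where
  "measure_comp \<psi> = map_pmf (\<lambda>c. if c then 1 else 0) (bernoulli_pmf ((cmod (vec_index \<psi> 1))\<^sup>2))"

definition QE :: "nat \<Rightarrow> real \<Rightarrow> nat \<Rightarrow> (complex Matrix.vec \<times> complex Matrix.vec) pmf" where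
  "QE s \<theta> b = map_pmf (\<lambda>r. (Hgate \<theta> r *\<^sub>v ket s, Hgate \<theta> r *\<^sub>v ket b)) (pmf_of_set {0, 1})"

definition QD :: "nat \<Rightarrow> real \<Rightarrow> complex Matrix.vec \<times> complex Matrix.vec \<Rightarrow> nat pmf" where
  "QD s \<theta> c = bind_pmf (measure_comp (mat_adjoint (Hgate \<theta> s) *\<^sub>v fst c))
     (\<lambda>r. measure_comp (mat_adjoint (Hgate \<theta> r) *\<^sub>v snd c))"

end

theory Submission imports Defs begin
lemma Hv: "r \<in> {0,1} \<Longrightarrow> s \<in> {0,1} \<Longrightarrow> Hgate \<theta> r *\<^sub>v ket s = Matrix.vec 2 (\<lambda>i. if i = 0 then complex_of_real (1/sqrt 2) else complex_of_real (1/sqrt 2) * (-1)^(r+s) * exp (\<i> * complex_of_real \<theta>))"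
  apply (rule eq_vecI)
  apply (auto simp: Hgate_def ket_def mat_of_rows_list_def scalar_prod_def unit_vec_def less_Suc_eq numeral_2_eq_2)
  done

lemma ee: "cnj (exp (\<i> * complex_of_real \<theta>)) * exp (\<i> * complex_of_real \<theta>) = 1"
proof -
  have "exp (\<i> * complex_of_real \<theta>) * cnj (exp (\<i> * complex_of_real \<theta>)) = complex_of_real ((cmod (exp (\<i> * complex_of_real \<theta>)))^2)"
    by (rule complex_norm_square[symmetric])
  also have "\<dots> = 1" by (simp add: norm_exp_i_times)
  finally show ?thesis by (simp add: mult.commute)
qed

lemma adj_idx: "i < dim_col A \<Longrightarrow> j < dim_row A \<Longrightarrow> mat_adjoint A $$ (i,j) = cnj (A $$ (j,i))"
  "dim_row (mat_adjoint A) = dim_col A" "dim_col (mat_adjoint A) = dim_row A"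
  by (auto simp: mat_adjoint_def mat_of_rows_index)

lemma Hdim: "dim_row (Hgate \<theta> s) = 2" "dim_col (Hgate \<theta> s) = 2"
  by (auto simp: Hgate_def mat_of_rows_list_def)

lemma Hidx: "Hgate \<theta> s $$ (0,0) = complex_of_real (1/sqrt 2)"
  "Hgate \<theta> s $$ (0,1) = complex_of_real (1/sqrt 2)"
  "Hgate \<theta> s $$ (1,0) = complex_of_real (1/sqrt 2) * (-1)^s * exp (\<i> * complex_of_real \<theta>)"
  "Hgate \<theta> s $$ (1,1) = complex_of_real (1/sqrt 2) * (-1)^(s+1) * exp (\<i> * complex_of_real \<theta>)"
  by (auto simp: Hgate_def mat_of_rows_list_def)

lemma Hidx': "Hgate \<theta> s $$ (0,Suc 0) = complex_of_real (1/sqrt 2)"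
  "Hgate \<theta> s $$ (Suc 0,0) = complex_of_real (1/sqrt 2) * (-1)^s * exp (\<i> * complex_of_real \<theta>)"
  "Hgate \<theta> s $$ (Suc 0,Suc 0) = complex_of_real (1/sqrt 2) * (-1)^(s+1) * exp (\<i> * complex_of_real \<theta>)"
  using Hidx by simp_all

lemma mv2: "dim_row A = 2 \<Longrightarrow> dim_col A = 2 \<Longrightarrow> dim_vec v = 2 \<Longrightarrow> i < 2 \<Longrightarrow>
   (A *\<^sub>v v) $ i = A $$ (i,0) * v $ 0 + A $$ (i,1) * v $ 1"
  by (simp add: scalar_prod_def numeral_2_eq_2)

lemma half: "complex_of_real (1/sqrt 2) * complex_of_real (1/sqrt 2) = 1/2"
  by (simp flip: of_real_mult)

lemma adj: assumes "r \<in> {0,1}" "s \<in> {0,1}"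
  shows "mat_adjoint (Hgate \<theta> s) *\<^sub>v (Hgate \<theta> r *\<^sub>v ket s) = ket r"
proof (rule eq_vecI)
  let ?e = "exp (\<i> * complex_of_real \<theta>)"
  let ?c = "complex_of_real (1/sqrt 2)"
  have E: "cnj ?e * ?e = 1" by (rule ee)
  show "dim_vec (mat_adjoint (Hgate \<theta> s) *\<^sub>v (Hgate \<theta> r *\<^sub>v ket s)) = dim_vec (ket r)"
    by (simp add: adj_idx Hdim ket_def)
  fix i assume "i < dim_vec (ket r)"
  hence i: "i < 2" by (simp add: ket_def)
  have "(mat_adjoint (Hgate \<theta> s) *\<^sub>v (Hgate \<theta> r *\<^sub>v ket s)) $ i
     = cnj (Hgate \<theta> s $$ (0,i)) * ?c + cnj (Hgate \<theta> s $$ (1,i)) * (?c * (-1)^(r+s) * ?e)"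
    using i assms by (subst mv2) (auto simp: adj_idx Hdim Hv)
  also have "\<dots> = (if i = r then 1 else 0)"
  proof -
    have ii: "i = 0 \<or> i = 1" using i by auto
    have rr: "r = 0 \<or> r = 1" "s = 0 \<or> s = 1" using assms by auto
    show ?thesis using ii rr E half
      by (elim disjE; simp add: Hidx Hidx'; simp add: algebra_simps)
  qed
  finally show "(mat_adjoint (Hgate \<theta> s) *\<^sub>v (Hgate \<theta> r *\<^sub>v ket s)) $ i = ket r $ i"
    using i by (simp add: ket_def unit_vec_def)
qed

lemma bern0: "bernoulli_pmf 0 = return_pmf False"
  by (rule pmf_eqI) (case_tac i; simp)
lemma bern1: "bernoulli_pmf 1 = return_pmf True"
  by (rule pmf_eqI) (case_tac i; simp)

lemma meas_ket: "r \<in> {0,1} \<Longrightarrow> measure_comp (ket r) = return_pmf r"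
  by (auto simp: measure_comp_def ket_def unit_vec_def bern0 bern1)

lemma QD_QE: assumes "r \<in> {0,1}" "s \<in> {0,1}" "b \<in> {0,1}"
  shows "QD s \<theta> (Hgate \<theta> r *\<^sub>v ket s, Hgate \<theta> r *\<^sub>v ket b) = return_pmf b"
proof -
  have sym: "Hgate \<theta> r *\<^sub>v ket b = Hgate \<theta> b *\<^sub>v ket r"
    using assms by (metis Hv add.commute)
  show ?thesis
    using assms by (simp add: QD_def adj meas_ket bind_return_pmf sym)
qed

theorem theorem1:
  shows "(\<forall>(\<theta>::real) u v. u \<in> {0, 1} \<longrightarrow> v \<in> {0, 1} \<longrightarrow>
            Hgate \<theta> u *\<^sub>v ket v = Hgate \<theta> v *\<^sub>v ket u)
       \<and> (\<forall>s (\<theta>::real) b. s \<in> {0, 1} \<longrightarrow> b \<in> {0, 1} \<longrightarrow>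
            bind_pmf (QE s \<theta> b) (QD s \<theta>) = return_pmf b)"
proof (intro conjI allI impI)
  fix \<theta> :: real and u v :: nat assume "u \<in> {0,1}" "v \<in> {0,1}"
  thus "Hgate \<theta> u *\<^sub>v ket v = Hgate \<theta> v *\<^sub>v ket u"
    by (metis Hv add.commute)
next
  fix s b :: nat and \<theta> :: real assume sb: "s \<in> {0,1}" "b \<in> {0,1}"
  have "bind_pmf (QE s \<theta> b) (QD s \<theta>) = bind_pmf (pmf_of_set {0,1::nat}) (\<lambda>_. return_pmf b)"
    unfolding QE_def bind_map_pmf
    by (rule bind_pmf_cong) (use sb in \<open>auto simp: QD_QE\<close>)
  thus "bind_pmf (QE s \<theta> b) (QD s \<theta>) = return_pmf b" by simp
qed

end
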